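(* Let $n>p\ge 1$, let $X\in\mathbb{R}^{n\times p}$ have rows $x_1^T,\dots,x_n^T$, let $Y=(y_1,\dots,y_n)^T\in\mathbb{R}^n$, and let $h$ be an integer with $p\le h<n$. Assume: (A1) $x_i\neq \pm x_j$ for all $i\neq j$, and $x_i\neq 0$ for all $i$; (A2) $r^2_{(h)}(\beta)>0$ for every $\beta\in\mathbb{R}^p$; (A3) for every $(\circ_1,\dots,\circ_{n-1})\in\{+,-\}^{n-1}$ the $(n-1)\times p$ matrix with rows $(x_1\circ_1 x_2)^T,\dots,(x_1\circ_{n-1}x_n)^T$ has rank $p$; (A4) $X$ has $h$-full rank, i.e. $X^T\mathrm{diag}(w)X$ is invertible for every $w\in Q^{(n,h)}$. Then the Borders Scanning Algorithm (BSA) described in the context terminates and its output $\hat\beta$ is a global minimizer of $OF(\beta)=\sum_{i=1}^h r^2_{(i)}(\beta)$ over $\beta\in\mathbb{R}^p$, i.e. $\hat\beta$ is the LTS estimate.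
   Context: For $\beta\in\mathbb{R}^p$, $r_i(\beta)=y_i-x_i^T\beta$ and $r^2_{(1)}(\beta)\le\dots\le r^2_{(n)}(\beta)$ are the squared residuals $r_1^2(\beta),\dots,r_n^2(\beta)$ sorted increasingly. $Q^{(n,h)}=\{w\in\{0,1\}^n: w^1+\dots+w^n=h\}$. For $w\in Q^{(n,h)}$, $W=\mathrm{diag}(w)$ and $J(w)=\|W(Y-X(X^TWX)^{-1}X^TWY)\|^2$. A pair $(\beta,w)\in\mathbb{R}^p\times Q^{(n,h)}$ is said to be in relation $Z$ if $\sum_{i=1}^h r^2_{(i)}(\beta)=\sum_{i=1}^n w^i r_i^2(\beta)$. For $a,b\in\mathbb{R}^k$ and $\circ\in\{+,-\}$, $a\circ b$ denotes $a+b$ or $a-b$. BSA: set $J_{\min}=+\infty$. For every $(p+1)$-element subset of $\{1,\dots,n\}$, with its elements listed (in a fixed order) as $i_1,\dots,i_{p+1}$, and for every $(\circ_1,\dots,\circ_p)\in\{+,-\}^p$: if the $p\times p$ linear system $(x_{i_1}\circ_j x_{i_{j+1}})^T\beta=y_{i_1}\circ_j y_{i_{j+1}}$, $j=1,\dots,p$, is regular, let $\beta_0$ be its unique solution; compute and sort the squared residuals at $\beta_0$; if $r^2_{i_1}(\beta_0)=r^2_{(h)}(\beta_0)=r^2_{(h+1)}(\beta_0)$, determine all $w\in Q^{(n,h)}$ with $(\beta_0,w)\in Z$, and for each such $w$, if $J(w)<J_{\min}$, set $J_{\min}=J(w)$ and $w_{\min}=w$. (Non-regular systems are skipped.) After all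 subsets and sign vectors are processed, output $\hat\beta=(X^TW_{\min}X)^{-1}X^TW_{\min}Y$ with $W_{\min}=\mathrm{diag}(w_{\min})$. *)

theory Defs
  imports "HOL-Analysis.Analysis" "HOL-Library.Multiset"
begin

text \<open>Observations are indexed by a finite linearly ordered type 'n (the linear order is the
  "fixed order" used to list subsets), coordinates by a finite type 'p.\<close>

definition resid :: "real^'p^'n \<Rightarrow> real^'n \<Rightarrow> real^'p \<Rightarrow> 'n \<Rightarrow> real" where
  "resid X Y \<beta> i = Y$i - (X$i) \<bullet> \<beta>"

text \<open>Squared residuals sorted increasingly: element k-1 of this list is r^2_(k).\<close>
definition sorted_sq_resid :: "real^'p^'n::finite \<Rightarrow> real^'n \<Rightarrow> real^'p \<Rightarrow> real list" where
  "sorted_sq_resid X Y \<beta> =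
     sorted_list_of_multiset (image_mset (\<lambda>i. (resid X Y \<beta> i)^2) (mset_set (UNIV :: 'n set)))"

definition ord_sq_resid :: "real^'p^'n::finite \<Rightarrow> real^'n \<Rightarrow> real^'p \<Rightarrow> nat \<Rightarrow> real" where
  "ord_sq_resid X Y \<beta> k = sorted_sq_resid X Y \<beta> ! (k - 1)"

definition OF :: "nat \<Rightarrow> real^'p^'n::finite \<Rightarrow> real^'n \<Rightarrow> real^'p \<Rightarrow> real" where
  "OF h X Y \<beta> = (\<Sum>k=1..h. ord_sq_resid X Y \<beta> k)"

definition Qnh :: "nat \<Rightarrow> (real^'n::finite) set" where
  "Qnh h = {w. (\<forall>i. w$i \<in> {0,1}) \<and> (\<Sum>i\<in>UNIV. w$i) = real h}"

definition diagm :: "real^'n \<Rightarrow> real^'n^'n" where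
  "diagm w = (\<chi> i j. if i = j then w$i else 0)"

definition beta_w :: "real^'p^'n \<Rightarrow> real^'n \<Rightarrow> real^'n \<Rightarrow> real^'p" where
  "beta_w X Y w = matrix_inv (transpose X ** diagm w ** X) *v (transpose X *v (diagm w *v Y))"

definition Jw :: "real^'p^'n \<Rightarrow> real^'n \<Rightarrow> real^'n \<Rightarrow> real" where
  "Jw X Y w = (norm (diagm w *v (Y - X *v beta_w X Y w)))^2"

definition relZ :: "nat \<Rightarrow> real^'p^'n::finite \<Rightarrow> real^'n \<Rightarrow> real^'p \<Rightarrow> real^'n \<Rightarrow> bool" where
  "relZ h X Y \<beta> w \<longleftrightarrow> OF h X Y \<beta> = (\<Sum>i\<in>UNIV. w$i * (resid X Y \<beta> i)^2)"

definition sgnb :: "bool \<Rightarrow> real" where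
  "sgnb b = (if b then 1 else -1)"

text \<open>The set of all w examined (and compared via J) by BSA.  For a (p+1)-subset S listed
  increasingly, i_1 = Min S; the remaining p elements i_2..i_{p+1} are enumerated by a
  bijection e from the row index type 'p onto S - {i_1} (the order of these rows is
  irrelevant: permuting rows together with their signs changes neither regularity nor the
  solution).\<close>
definition BSA_candidates :: "nat \<Rightarrow> real^'p^('n::{finite,linorder}) \<Rightarrow> real^('n::{finite,linorder}) \<Rightarrow> (real^('n::{finite,linorder})) set" where
  "BSA_candidates h X Y = {w \<in> Qnh h. \<exists>S e s.
      S \<subseteq> UNIV \<and> card S = CARD('p) + 1 \<and>
      bij_betw e (UNIV :: 'p set) (S - {Min S}) \<and>
      (let A = (\<chi> j. X$(Min S) + sgnb (s j) *\<^sub>R X$(e j)) :: real^'p^'p;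
           b = (\<chi> j. Y$(Min S) + sgnb (s j) * Y$(e j)) :: real^'p;
           \<beta>0 = matrix_inv A *v b
       in invertible A \<and>
          (resid X Y \<beta>0 (Min S))^2 = ord_sq_resid X Y \<beta>0 h \<and>
          ord_sq_resid X Y \<beta>0 h = ord_sq_resid X Y \<beta>0 (h + 1) \<and>
          relZ h X Y \<beta>0 w)}"

end

theory Submission
  imports Defs
begin

definition SL :: "('n::finite \<Rightarrow> real) \<Rightarrow> real list" where
  "SL f = sorted_list_of_multiset (image_mset f (mset_set UNIV))"

definition good :: "('n::finite \<Rightarrow> real) \<Rightarrow> 'n set \<Rightarrow> nat \<Rightarrow> bool" where
  "good f A h \<longleftrightarrow> card A = h \<and> (\<forall>a\<in>A. \<forall>b. b \<notin> A \<longrightarrow> f a \<le> f b)"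

lemma good_enum:
  fixes f :: "'n::{finite,linorder} \<Rightarrow> real"
  assumes "good f A h"
  obtains xs1 xs2 where "distinct (xs1@xs2)" "set xs1 = A" "set xs2 = -A"
    "sorted (map f (xs1@xs2))" "length xs1 = h" "SL f = map f (xs1@xs2)"
proof -
  define xs1 where "xs1 = sort_key f (sorted_list_of_set A)"
  define xs2 where "xs2 = sort_key f (sorted_list_of_set (-A))"
  have s1: "set xs1 = A" "set xs2 = -A" unfolding xs1_def xs2_def by auto
  have d: "distinct (xs1@xs2)" using s1 unfolding xs1_def xs2_def by auto
  have so1: "sorted (map f xs1)" "sorted (map f xs2)" unfolding xs1_def xs2_def
    by (simp_all add: sorted_sort_key)
  have so: "sorted (map f (xs1@xs2))"
    unfolding map_append sorted_append using so1 assms s1 unfolding good_def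
    by auto
  have l: "length xs1 = h" using assms s1 d unfolding good_def
    by (metis distinct_append distinct_card)
  have "set (xs1@xs2) = UNIV" using s1 by auto
  then have "mset_set UNIV = mset (xs1@xs2)" using d by (metis mset_set_set)
  then have "image_mset f (mset_set UNIV) = mset (map f (xs1@xs2))"
    by (simp only: mset_map)
  then have "SL f = map f (xs1@xs2)" unfolding SL_def
    using so by (simp only: sorted_list_of_multiset_mset sorted_sort_id)
  then show ?thesis using that d s1 so l by blast
qed

lemma good_h:
  fixes f :: "'n::{finite,linorder} \<Rightarrow> real"
  assumes "good f A h" "1 \<le> h"
  shows "\<exists>c\<in>A. SL f ! (h-1) = f c \<and> (\<forall>a\<in>A. f a \<le> f c)"
proof -
  obtain xs1 xs2 where d: "distinct (xs1@xs2)" "set xs1 = A" "set xs2 = -A"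
    "sorted (map f (xs1@xs2))" "length xs1 = h" "SL f = map f (xs1@xs2)"
    using good_enum[OF assms(1)] by blast
  have hl: "h - 1 < length xs1" using d assms by auto
  have "SL f ! (h-1) = f (xs1 ! (h-1))" using d hl by (simp add: nth_append)
  moreover have "xs1 ! (h-1) \<in> A" using d(2) hl nth_mem[of "h-1" xs1] by auto
  moreover have "f a \<le> f (xs1 ! (h-1))" if aA: "a \<in> A" for a
  proof -
    obtain i where i: "i < length xs1" "xs1 ! i = a" using aA d(2) in_set_conv_nth[of a xs1] by auto
    have "(map f (xs1@xs2)) ! i \<le> (map f (xs1@xs2)) ! (h-1)"
      using d(4) i hl d(5) by (intro sorted_nth_mono) auto
    then show ?thesis using i hl by (simp add: nth_append)
  qed
  ultimately show ?thesis by blast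
qed

lemma good_h1:
  fixes f :: "'n::{finite,linorder} \<Rightarrow> real"
  assumes "good f A h" "h < CARD('n)"
  shows "\<exists>c. c \<notin> A \<and> SL f ! h = f c \<and> (\<forall>b. b \<notin> A \<longrightarrow> f c \<le> f b)"
proof -
  obtain xs1 xs2 where d: "distinct (xs1@xs2)" "set xs1 = A" "set xs2 = -A"
    "sorted (map f (xs1@xs2))" "length xs1 = h" "SL f = map f (xs1@xs2)"
    using good_enum[OF assms(1)] by blast
  have "set (xs1@xs2) = UNIV" using d by auto
  then have "length (xs1@xs2) = CARD('n)"
    using d by (metis distinct_card)
  then have hl: "0 < length xs2" using d assms by auto
  have "SL f ! h = f (xs2 ! 0)" using d hl by (simp add: nth_append)
  moreover have "xs2 ! 0 \<notin> A" using d(3) hl nth_mem[of 0 xs2] by auto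
  moreover have "f (xs2 ! 0) \<le> f b" if bA: "b \<notin> A" for b
  proof -
    obtain i where i: "i < length xs2" "xs2 ! i = b" using bA d(3) in_set_conv_nth[of b xs2] by auto
    have "(map f (xs1@xs2)) ! h \<le> (map f (xs1@xs2)) ! (h + i)"
      using d(4) i d(5) by (intro sorted_nth_mono) auto
    then show ?thesis using i d(5) hl by (simp add: nth_append)
  qed
  ultimately show ?thesis by blast
qed

lemma good_sum:
  fixes f :: "'n::{finite,linorder} \<Rightarrow> real"
  assumes "good f A h"
  shows "(\<Sum>k=1..h. SL f ! (k-1)) = sum f A"
proof -
  obtain xs1 xs2 where d: "distinct (xs1@xs2)" "set xs1 = A" "set xs2 = -A"
    "sorted (map f (xs1@xs2))" "length xs1 = h" "SL f = map f (xs1@xs2)"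
    using good_enum[OF assms(1)] by blast
  have "(\<Sum>k=1..h. SL f ! (k-1)) = (\<Sum>k<h. SL f ! k)"
    by (rule sum.reindex_bij_witness[where i="\<lambda>k. k+1" and j="\<lambda>k. k-1"]) auto
  also have "\<dots> = (\<Sum>k<h. f (xs1 ! k))" using d by (intro sum.cong) (auto simp: nth_append)
  also have "\<dots> = sum_list (map f xs1)" using d(5)
    by (simp add: sum_list_sum_nth atLeast0LessThan)
  also have "\<dots> = sum f A" using d(1,2) by (simp add: sum_list_distinct_conv_sum_set)
  finally show ?thesis .
qed


lemma sum_exchange:
  fixes f :: "'a \<Rightarrow> real"
  assumes "finite P" "finite Q" "card P = card Q" "\<forall>a\<in>P. \<forall>b\<in>Q. f a \<le> f b"
  shows "sum f P \<le> sum f Q"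
proof (cases "P = {}")
  case True then show ?thesis using assms by auto
next
  case False
  define c where "c = Max (f ` P)"
  have "\<forall>a\<in>P. f a \<le> c" unfolding c_def using assms(1) by auto
  then have "sum f P \<le> of_nat (card P) * c" using sum_bounded_above[of P f c] by auto
  moreover have "Max (f ` P) \<in> f ` P" using assms(1) False by (intro Max_in) auto
  then have "\<forall>b\<in>Q. c \<le> f b" unfolding c_def using assms(4) by auto
  then have "of_nat (card Q) * c \<le> sum f Q" using sum_bounded_below[of Q c f] by auto
  ultimately show ?thesis using assms(3) by simp
qed

lemma good_le:
  fixes f :: "'n::finite \<Rightarrow> real"
  assumes "good f A h" "card T = h"
  shows "sum f A \<le> sum f T"
proof -
  have fin: "finite A" "finite T" by auto
  have e1: "sum f A = sum f (A \<inter> T) + sum f (A - T)"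
    by (metis fin(1) sum.Int_Diff)
  have e2: "sum f T = sum f (A \<inter> T) + sum f (T - A)"
    by (metis fin(2) sum.Int_Diff Int_commute)
  have c1: "card (A - T) = card A - card (A \<inter> T)" by (simp add: card_Diff_subset_Int)
  have c2: "card (T - A) = card T - card (A \<inter> T)"
    by (metis Int_commute card_Diff_subset_Int fin(1) finite_Int)
  have "card (A - T) = card (T - A)" using c1 c2 assms unfolding good_def by simp
  moreover have "\<forall>a\<in>A - T. \<forall>b\<in>T - A. f a \<le> f b" using assms(1) unfolding good_def by auto
  ultimately have "sum f (A - T) \<le> sum f (T - A)" by (intro sum_exchange) auto
  then show ?thesis using e1 e2 by simp
qed

lemma min_good:
  fixes f :: "'n::finite \<Rightarrow> real"
  assumes "card A = h" "\<forall>T. card T = h \<longrightarrow> sum f A \<le> sum f T"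
  shows "good f A h"
  unfolding good_def
proof (intro conjI assms(1) ballI allI impI)
  fix a b assume a: "a \<in> A" and b: "b \<notin> A"
  show "f a \<le> f b"
  proof (rule ccontr)
    assume "\<not> f a \<le> f b"
    define T where "T = insert b (A - {a})"
    have "card T = h" unfolding T_def using a b assms(1) card_gt_0_iff[of A] by (auto simp: card_Diff_singleton)
    have "sum f T = f b + sum f (A - {a})" unfolding T_def using b by simp
    also have "\<dots> = f b + sum f A - f a" using a by (simp add: sum_diff1)
    finally have "sum f T < sum f A" using \<open>\<not> f a \<le> f b\<close> by simp
    then show False using assms(2) \<open>card T = h\<close> by force
  qed
qed

lemma good_ex:
  fixes f :: "'n::finite \<Rightarrow> real"
  assumes "h \<le> CARD('n)"
  shows "\<exists>A. good f A h"
proof -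
  let ?C = "{A :: 'n set. card A = h}"
  have fC: "finite ?C" by simp
  obtain A0 :: "'n set" where "card A0 = h" using assms obtain_subset_with_card_n[of h "UNIV :: 'n set"] by auto
  then have ne: "?C \<noteq> {}" by auto
  have "Min (sum f ` ?C) \<in> sum f ` ?C" using fC ne by (intro Min_in) auto
  then obtain A where A1: "A \<in> ?C" "sum f A = Min (sum f ` ?C)" by auto
  have "\<forall>T\<in>?C. sum f A \<le> sum f T" using A1(2) fC by simp
  note A = A1(1) this
  then show ?thesis using min_good[of A h f] by auto
qed


definition FF :: "real^'p^'n \<Rightarrow> real^'n \<Rightarrow> real^'p \<Rightarrow> 'n \<Rightarrow> real" where
  "FF X Y \<beta> i = (resid X Y \<beta> i)^2"

lemma OF_SL: "OF h X Y \<beta> = (\<Sum>k=1..h. SL (FF X Y \<beta>) ! (k-1))"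
  unfolding OF_def ord_sq_resid_def sorted_sq_resid_def SL_def FF_def by simp

lemma ord_SL: "ord_sq_resid X Y \<beta> k = SL (FF X Y \<beta>) ! (k-1)"
  unfolding ord_sq_resid_def sorted_sq_resid_def SL_def FF_def by simp

definition Wset :: "real^'n \<Rightarrow> 'n set" where "Wset w = {i. w$i = 1}"
definition ind :: "'n set \<Rightarrow> real^'n" where "ind A = (\<chi> i. if i \<in> A then 1 else 0)"

lemma Qnh_sum:
  fixes w :: "real^'n::finite"
  assumes "w \<in> Qnh h"
  shows "(\<Sum>i\<in>UNIV. w$i * g i) = sum g (Wset w)"
proof -
  have "(\<Sum>i\<in>UNIV. w$i * g i) = (\<Sum>i\<in>UNIV. if i \<in> Wset w then g i else 0)"
    using assms unfolding Qnh_def Wset_def by (intro sum.cong) auto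
  also have "\<dots> = sum g (Wset w)" by (simp add: sum.If_cases)
  finally show ?thesis .
qed

lemma Qnh_card:
  fixes w :: "real^'n::finite"
  assumes "w \<in> Qnh h"
  shows "card (Wset w) = h"
proof -
  have "real h = (\<Sum>i\<in>UNIV. w$i * 1)" using assms unfolding Qnh_def by simp
  also have "\<dots> = real (card (Wset w))" using Qnh_sum[OF assms, of "\<lambda>_. 1"] by simp
  finally show ?thesis by simp
qed

lemma ind_Qnh:
  fixes A :: "'n::finite set"
  assumes "card A = h"
  shows "ind A \<in> Qnh h" "Wset (ind A) = A"
proof -
  have "(\<Sum>i\<in>UNIV. (ind A)$i) = (\<Sum>i\<in>UNIV. if i \<in> A then 1 else 0)"
    unfolding ind_def by simp
  also have "\<dots> = real (card A)" by (simp add: sum.If_cases)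
  finally show "ind A \<in> Qnh h" unfolding Qnh_def using assms by (auto simp: ind_def)
  show "Wset (ind A) = A" unfolding Wset_def ind_def by auto
qed

lemma Qnh_ind: "w \<in> Qnh h \<Longrightarrow> w = ind (Wset w)"
  unfolding Qnh_def ind_def Wset_def by (auto simp: vec_eq_iff)

lemma Qnh_finite: "finite (Qnh h :: (real^'n::finite) set)"
proof -
  have "Qnh h \<subseteq> range (ind :: 'n set \<Rightarrow> _)" using Qnh_ind by blast
  then show ?thesis by (rule finite_subset) auto
qed

definition gw :: "real^'p^'n::finite \<Rightarrow> real^'n \<Rightarrow> real^'n \<Rightarrow> real^'p \<Rightarrow> real" where
  "gw X Y w \<beta> = (\<Sum>i\<in>UNIV. w$i * (resid X Y \<beta> i)^2)"

lemma diagm_mult: "(diagm w *v v)$i = w$i * v$i"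
proof -
  have "(diagm w *v v)$i = (\<Sum>j\<in>UNIV. (if i = j then w$i else 0) * v$j)"
    by (simp add: diagm_def matrix_vector_mult_def)
  also have "\<dots> = (\<Sum>j\<in>UNIV. if j = i then w$i * v$j else 0)"
    by (rule sum.cong) auto
  finally show ?thesis by simp
qed

lemma mv_nth: "(X *v u)$i = X$i \<bullet> u"
  unfolding matrix_vector_mult_def inner_vec_def by (simp add: mult.commute)

lemma inner_transpose: "(transpose X *v z) \<bullet> d = (\<Sum>i\<in>UNIV. z$i * (X$i \<bullet> d))"
proof -
  have "(transpose X *v z) \<bullet> d = (\<Sum>k\<in>UNIV. (\<Sum>i\<in>UNIV. X$i$k * z$i) * d$k)"
    unfolding inner_vec_def matrix_vector_mult_def transpose_def by simp
  also have "\<dots> = (\<Sum>k\<in>UNIV. \<Sum>i\<in>UNIV. z$i * (X$i$k * d$k))"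
    by (simp add: sum_distrib_right sum_distrib_left algebra_simps)
  also have "\<dots> = (\<Sum>i\<in>UNIV. z$i * (X$i \<bullet> d))"
    by (subst sum.swap) (simp add: inner_vec_def sum_distrib_left)
  finally show ?thesis .
qed

lemma matrix_inv_right':
  fixes M :: "real^'p^'p"
  assumes "invertible M" shows "M ** matrix_inv M = mat 1"
  using assms unfolding invertible_def matrix_inv_def by (metis (mono_tags, lifting) someI_ex)

lemma LS_min:
  fixes X :: "real^'p^'n::finite"
  assumes inv: "invertible (transpose X ** diagm w ** X)" and wpos: "\<forall>i. w$i \<ge> 0"
  shows "gw X Y w (beta_w X Y w) \<le> gw X Y w \<beta>"
proof -
  let ?M = "transpose X ** diagm w ** X"
  let ?z = "transpose X *v (diagm w *v Y)"
  define b0 where "b0 = beta_w X Y w"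
  have "?M *v b0 = (?M ** matrix_inv ?M) *v ?z"
    unfolding b0_def beta_w_def by (rule matrix_vector_mul_assoc)
  also have "\<dots> = ?z" using matrix_inv_right'[OF inv] by simp
  finally have ne: "?M *v b0 = ?z" .
  have mvb: "?M *v b0 = transpose X *v (diagm w *v (X *v b0))"
    by (simp add: matrix_vector_mul_assoc matrix_mul_assoc)
  define d where "d = \<beta> - b0"
  have "(transpose X *v (diagm w *v (X *v b0))) \<bullet> d = ?z \<bullet> d"
    using ne mvb by simp
  then have "(\<Sum>i\<in>UNIV. w$i * (X$i \<bullet> b0) * (X$i \<bullet> d)) = (\<Sum>i\<in>UNIV. w$i * Y$i * (X$i \<bullet> d))"
    unfolding inner_transpose diagm_mult by (simp add: mv_nth)
  then have orth: "(\<Sum>i\<in>UNIV. w$i * resid X Y b0 i * (X$i \<bullet> d)) = 0"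
    unfolding resid_def by (simp add: algebra_simps sum_subtractf)
  have rr: "resid X Y \<beta> i = resid X Y b0 i - X$i \<bullet> d" for i
    unfolding resid_def d_def by (simp add: inner_diff_right)
  have "gw X Y w \<beta> = (\<Sum>i\<in>UNIV. w$i * (resid X Y b0 i)^2)
        - 2 * (\<Sum>i\<in>UNIV. w$i * resid X Y b0 i * (X$i \<bullet> d))
        + (\<Sum>i\<in>UNIV. w$i * (X$i \<bullet> d)^2)"
    unfolding gw_def rr by (simp add: power2_diff algebra_simps sum.distrib sum_subtractf sum_distrib_left)
  also have "\<dots> = gw X Y w b0 + (\<Sum>i\<in>UNIV. w$i * (X$i \<bullet> d)^2)"
    using orth unfolding gw_def by simp
  also have "\<dots> \<ge> gw X Y w b0" using wpos by (simp add: sum_nonneg)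
  finally show ?thesis unfolding b0_def .
qed

lemma Jw_eq:
  fixes X :: "real^'p^'n::finite"
  assumes "w \<in> Qnh h"
  shows "Jw X Y w = gw X Y w (beta_w X Y w)"
proof -
  have w01: "w$i * w$i = w$i" for i using assms unfolding Qnh_def by auto
  have "Jw X Y w = (\<Sum>i\<in>UNIV. ((diagm w *v (Y - X *v beta_w X Y w))$i)^2)"
    unfolding Jw_def by (simp add: norm_vec_def L2_set_def real_sqrt_pow2 sum_nonneg)
  also have "\<dots> = (\<Sum>i\<in>UNIV. (w$i * w$i) * (resid X Y (beta_w X Y w) i)^2)"
    unfolding diagm_mult resid_def by (simp add: mv_nth power_mult_distrib power2_eq_square algebra_simps)
  also have "\<dots> = gw X Y w (beta_w X Y w)" unfolding gw_def w01 ..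
  finally show ?thesis .
qed


lemma first_event:
  fixes g :: "'k \<Rightarrow> real \<Rightarrow> real"
  assumes fin: "finite K" and cont: "\<forall>k\<in>K. continuous_on UNIV (g k)"
    and pos: "\<forall>k\<in>K. g k 0 > 0" and k0: "k0 \<in> K" "t0 > 0" "g k0 t0 \<le> 0"
  shows "\<exists>t1>0. (\<forall>k\<in>K. g k t1 \<ge> 0) \<and> (\<exists>k\<in>K. g k t1 = 0)"
proof -
  define Z where "Z = {t::real. 0 \<le> t} \<inter> (\<Union>k\<in>K. {t. g k t \<le> 0})"
  have cl: "closed Z" unfolding Z_def
  proof (intro closed_Int closed_UN ballI fin)
    show "closed {t::real. 0 \<le> t}" using closed_atLeast[of 0] by (simp add: atLeast_def)
    fix k assume "k \<in> K"
    then show "closed {t. g k t \<le> 0}" using cont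
      by (intro closed_Collect_le) (auto intro: continuous_intros)
  qed
  have "t0 \<in> Z" using k0 unfolding Z_def by auto
  then have ne: "Z \<noteq> {}" by auto
  have bdd: "bdd_below Z" unfolding Z_def by (rule bdd_belowI[of _ 0]) auto
  define t1 where "t1 = Inf Z"
  have t1Z: "t1 \<in> Z" unfolding t1_def using closed_contains_Inf[OF ne bdd cl] .
  have low: "t1 \<le> t" if "t \<in> Z" for t unfolding t1_def using that bdd by (rule cInf_lower)
  have t1pos: "t1 > 0"
  proof -
    have "t1 \<ge> 0" using t1Z unfolding Z_def by auto
    moreover have "t1 \<noteq> 0" using t1Z pos unfolding Z_def by force
    ultimately show ?thesis by simp
  qed
  have nn: "g k t1 \<ge> 0" if k: "k \<in> K" for k
  proof (rule ccontr)
    assume "\<not> g k t1 \<ge> 0"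
    then have "(\<lambda>t. - g k t) 0 \<le> 0" "0 \<le> (\<lambda>t. - g k t) t1" using pos k by auto
    moreover have "continuous_on {0..t1} (\<lambda>t. - g k t)"
      using cont k by (auto intro!: continuous_intros intro: continuous_on_subset)
    ultimately obtain x where x: "0 \<le> x" "x \<le> t1" "- g k x = 0"
      using IVT'[of "\<lambda>t. - g k t" 0 0 t1] t1pos by auto
    then have "x \<in> Z" unfolding Z_def using k by force
    then have "t1 \<le> x" by (rule low)
    then have "x = t1" using x by simp
    then show False using x \<open>\<not> g k t1 \<ge> 0\<close> by simp
  qed
  obtain k where "k \<in> K" "g k t1 \<le> 0" using t1Z unfolding Z_def by auto
  then have "g k t1 = 0" using nn by force
  then show ?thesis using t1pos nn \<open>k \<in> K\<close> by blast
qed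


lemma matrix_inv_left':
  fixes M :: "real^'p^'p"
  assumes "invertible M" shows "matrix_inv M ** M = mat 1"
  using assms unfolding invertible_def matrix_inv_def by (metis (mono_tags, lifting) someI_ex)

locale lts =
  fixes X :: "real^'p^('n::{finite,linorder})" and Y :: "real^('n::{finite,linorder})" and h :: nat
  assumes h1: "1 \<le> h" and hn: "h < CARD('n)"
    and A2: "\<forall>\<beta>. ord_sq_resid X Y \<beta> h > 0"
    and A4: "\<forall>w \<in> Qnh h. invertible (transpose X ** diagm w ** X)"
    and A1': "\<forall>i. X$i \<noteq> 0"
begin

lemma fullrank:
  assumes "\<forall>i. X$i \<bullet> d = 0" shows "d = 0"
proof -
  obtain A0 :: "'n set" where A0: "card A0 = h"
    using hn obtain_subset_with_card_n[of h "UNIV :: 'n set"] by auto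
  let ?w = "ind A0"
  let ?M = "transpose X ** diagm ?w ** X"
  have inv: "invertible ?M" using A4 ind_Qnh[OF A0] by auto
  have Xd: "X *v d = 0" using assms by (simp add: vec_eq_iff mv_nth)
  have "?M *v d = transpose X *v (diagm ?w *v (X *v d))"
    by (simp add: matrix_vector_mul_assoc matrix_mul_assoc)
  also have "\<dots> = 0" using Xd by simp
  finally have "?M *v d = 0" .
  then have "(matrix_inv ?M ** ?M) *v d = 0" by (simp flip: matrix_vector_mul_assoc)
  then show "d = 0" using matrix_inv_left'[OF inv] by simp
qed

lemma OF_lower:
  assumes "w \<in> Qnh h" shows "OF h X Y \<beta> \<le> gw X Y w \<beta>"
proof -
  obtain G where G: "good (FF X Y \<beta>) G h" using good_ex hn by (metis less_imp_le)
  have "OF h X Y \<beta> = sum (FF X Y \<beta>) G" by (simp only: OF_SL good_sum[OF G])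
  also have "\<dots> \<le> sum (FF X Y \<beta>) (Wset w)" using good_le[OF G Qnh_card[OF assms]] .
  also have "\<dots> = gw X Y w \<beta>" unfolding gw_def using Qnh_sum[OF assms] by (simp add: FF_def)
  finally show ?thesis .
qed

lemma OF_ge_J:
  assumes "w \<in> Qnh h" and wmin: "\<forall>w'\<in>Qnh h. Jw X Y w \<le> Jw X Y w'"
  shows "Jw X Y w \<le> OF h X Y \<beta>"
proof -
  obtain G where G: "good (FF X Y \<beta>) G h" using good_ex hn by (metis less_imp_le)
  have cG: "card G = h" using G unfolding good_def by simp
  note iq = ind_Qnh[OF cG]
  have "OF h X Y \<beta> = sum (FF X Y \<beta>) G" by (simp only: OF_SL good_sum[OF G])
  also have "\<dots> = gw X Y (ind G) \<beta>" unfolding gw_def using Qnh_sum[OF iq(1)] iq(2) by (simp add: FF_def)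
  also have "\<dots> \<ge> gw X Y (ind G) (beta_w X Y (ind G))"
    using A4 iq(1) by (intro LS_min) (auto simp: ind_def)
  also have "gw X Y (ind G) (beta_w X Y (ind G)) = Jw X Y (ind G)" using Jw_eq[OF iq(1), where X=X and Y=Y] by simp
  also have "Jw X Y (ind G) \<ge> Jw X Y w" using wmin iq(1) by auto
  finally show ?thesis by simp
qed

end


locale lts2 = lts X Y h for X :: "real^'p^('n::{finite,linorder})" and Y :: "real^('n::{finite,linorder})" and h :: nat +
  fixes ws :: "real^('n::{finite,linorder})"
  assumes ws: "ws \<in> Qnh h" and wsmin: "\<forall>w'\<in>Qnh h. Jw X Y ws \<le> Jw X Y w'"
begin

definition "Ast = Wset ws"
definition "valid \<beta> \<longleftrightarrow> good (FF X Y \<beta>) Ast h \<and> (\<exists>a\<in>Ast. \<exists>b. b \<notin> Ast \<and> FF X Y \<beta> a = FF X Y \<beta> b)"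
definition "Gs \<beta> = {k. FF X Y \<beta> k = ord_sq_resid X Y \<beta> h}"

lemma cAst: "card Ast = h" unfolding Ast_def using Qnh_card[OF ws] .

lemma valid_level:
  assumes "valid \<beta>" "a \<in> Ast" "b \<notin> Ast" "FF X Y \<beta> a = FF X Y \<beta> b"
  shows "ord_sq_resid X Y \<beta> h = FF X Y \<beta> a" "ord_sq_resid X Y \<beta> (h+1) = FF X Y \<beta> a"
proof -
  have g: "good (FF X Y \<beta>) Ast h" using assms(1) unfolding valid_def by simp
  obtain c where c: "c \<in> Ast" "SL (FF X Y \<beta>) ! (h-1) = FF X Y \<beta> c" "\<forall>a\<in>Ast. FF X Y \<beta> a \<le> FF X Y \<beta> c"
    using good_h[OF g h1] by blast
  have "FF X Y \<beta> c \<le> FF X Y \<beta> b" using g c(1) assms(3) unfolding good_def by blast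
  then show "ord_sq_resid X Y \<beta> h = FF X Y \<beta> a" using c assms(2,4) ord_SL[of X Y \<beta> h] by force
  obtain c' where c': "c' \<notin> Ast" "SL (FF X Y \<beta>) ! h = FF X Y \<beta> c'" "\<forall>b. b \<notin> Ast \<longrightarrow> FF X Y \<beta> c' \<le> FF X Y \<beta> b"
    using good_h1[OF g hn] by blast
  have "FF X Y \<beta> a \<le> FF X Y \<beta> c'" using g c'(1) assms(2) unfolding good_def by blast
  then show "ord_sq_resid X Y \<beta> (h+1) = FF X Y \<beta> a" using c' assms(3,4) ord_SL[of X Y \<beta> "h+1"] by force
qed

lemma FF_cont: "continuous_on UNIV (\<lambda>t::real. FF X Y (b + t *\<^sub>R d) k)"
  unfolding FF_def resid_def by (intro continuous_intros)

lemma init: "\<exists>\<beta>. valid \<beta>"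
proof -
  define bs where "bs = beta_w X Y ws"
  have "Jw X Y ws = gw X Y ws bs" unfolding bs_def using Jw_eq[OF ws] .
  also have "\<dots> \<ge> OF h X Y bs" using OF_lower[OF ws] .
  moreover have "OF h X Y bs \<ge> Jw X Y ws" using OF_ge_J[OF ws wsmin] .
  ultimately have eq: "OF h X Y bs = gw X Y ws bs" by simp
  have gwA: "gw X Y w' \<beta> = sum (FF X Y \<beta>) (Wset w')" if "w' \<in> Qnh h" for w' \<beta>
    unfolding gw_def using Qnh_sum[OF that] by (simp add: FF_def)
  have good0: "good (FF X Y bs) Ast h"
  proof (rule min_good[OF cAst], intro allI impI)
    fix T :: "'n set" assume T: "card T = h"
    have "sum (FF X Y bs) Ast = OF h X Y bs" using eq gwA[OF ws] unfolding Ast_def by simp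
    also have "\<dots> \<le> gw X Y (ind T) bs" using OF_lower[OF ind_Qnh(1)[OF T]] .
    also have "\<dots> = sum (FF X Y bs) T" using gwA[OF ind_Qnh(1)[OF T]] ind_Qnh(2)[OF T] by simp
    finally show "sum (FF X Y bs) Ast \<le> sum (FF X Y bs) T" .
  qed
  show ?thesis
  proof (cases "\<exists>a\<in>Ast. \<exists>b. b \<notin> Ast \<and> FF X Y bs a = FF X Y bs b")
    case True then show ?thesis using good0 unfolding valid_def by blast
  next
    case False
    then have strict: "\<forall>a\<in>Ast. \<forall>b. b \<notin> Ast \<longrightarrow> FF X Y bs a < FF X Y bs b"
      using good0 unfolding good_def by force
    have "Ast \<noteq> UNIV" using cAst hn by auto
    then obtain b0 where b0: "b0 \<notin> Ast" by auto
    have "X$b0 \<noteq> 0" using A1' by simp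
    define b1 where "b1 = (Y$b0 / (X$b0 \<bullet> X$b0)) *\<^sub>R X$b0"
    have r0: "FF X Y b1 b0 = 0" unfolding b1_def FF_def resid_def using \<open>X$b0 \<noteq> 0\<close> by simp
    have notgood: "\<exists>a\<in>Ast. \<exists>b. b \<notin> Ast \<and> FF X Y b1 b < FF X Y b1 a"
    proof (rule ccontr)
      assume "\<not> ?thesis"
      then have g: "good (FF X Y b1) Ast h" using cAst unfolding good_def by force
      obtain c where c: "c \<in> Ast" "SL (FF X Y b1) ! (h-1) = FF X Y b1 c"
        using good_h[OF g h1] by blast
      have "FF X Y b1 c \<le> 0" using g c(1) b0 r0 unfolding good_def by force
      then have "ord_sq_resid X Y b1 h \<le> 0" using c(2) ord_SL[of X Y b1 h] by simp
      moreover have "0 < ord_sq_resid X Y b1 h" using A2 by blast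
      ultimately show False by linarith
    qed
    then obtain a1 b1' where ab1: "a1 \<in> Ast" "b1' \<notin> Ast" "FF X Y b1 b1' < FF X Y b1 a1" by blast
    define K where "K = Ast \<times> (- Ast)"
    define g where "g = (\<lambda>(a,b) t. FF X Y (bs + t *\<^sub>R (b1 - bs)) b - FF X Y (bs + t *\<^sub>R (b1 - bs)) a)"
    have "\<exists>t1>0. (\<forall>k\<in>K. g k t1 \<ge> 0) \<and> (\<exists>k\<in>K. g k t1 = 0)"
    proof (rule first_event[of K g "(a1,b1')" 1])
      show "finite K" by simp
      show "\<forall>k\<in>K. continuous_on UNIV (g k)" unfolding g_def
        by (auto intro!: continuous_intros FF_cont)
      show "\<forall>k\<in>K. 0 < g k 0" unfolding g_def K_def using strict by auto
      show "(a1, b1') \<in> K" unfolding K_def using ab1 by auto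
      show "g (a1, b1') 1 \<le> 0" unfolding g_def using ab1 by simp
    qed simp
    then obtain t1 where t1: "\<forall>k\<in>K. g k t1 \<ge> 0" "\<exists>k\<in>K. g k t1 = 0" by blast
    let ?b = "bs + t1 *\<^sub>R (b1 - bs)"
    have "valid ?b" unfolding valid_def good_def
      using t1 cAst unfolding K_def g_def by force
    then show ?thesis by blast
  qed
qed

lemma step:
  assumes v: "valid \<beta>" and m: "m \<in> Gs \<beta>"
    and HG: "\<forall>k\<in>Gs \<beta>. \<forall>t. FF X Y (\<beta> + t *\<^sub>R d) k = FF X Y (\<beta> + t *\<^sub>R d) m"
    and k0: "k0 \<notin> Gs \<beta>" "t0 > 0" "FF X Y (\<beta> + t0 *\<^sub>R d) k0 = FF X Y (\<beta> + t0 *\<^sub>R d) m"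
  shows "\<exists>\<beta>'. valid \<beta>' \<and> card (Gs \<beta>) < card (Gs \<beta>')"
proof -
  obtain a0 b0 where ab: "a0 \<in> Ast" "b0 \<notin> Ast" "FF X Y \<beta> a0 = FF X Y \<beta> b0"
    using v unfolding valid_def by blast
  have gd: "good (FF X Y \<beta>) Ast h" using v unfolding valid_def by simp
  have lev: "ord_sq_resid X Y \<beta> h = FF X Y \<beta> a0" using valid_level[OF v ab] by simp
  have Fm: "FF X Y \<beta> m = FF X Y \<beta> a0" using m lev unfolding Gs_def by simp
  have a0G: "a0 \<in> Gs \<beta>" "b0 \<in> Gs \<beta>" using lev ab unfolding Gs_def by auto
  define hk where "hk = (\<lambda>k t. FF X Y (\<beta> + t *\<^sub>R d) k - FF X Y (\<beta> + t *\<^sub>R d) m)"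
  define sg where "sg = (\<lambda>k. if hk k 0 > 0 then (1::real) else -1)"
  define K where "K = - Gs \<beta>"
  define g where "g = (\<lambda>k t. sg k * hk k t)"
  have hk0: "hk k 0 = FF X Y \<beta> k - FF X Y \<beta> a0" for k unfolding hk_def using Fm by simp
  have hkne: "hk k 0 \<noteq> 0" if "k \<in> K" for k
    using that lev unfolding hk0 K_def Gs_def by auto
  have "\<exists>t1>0. (\<forall>k\<in>K. g k t1 \<ge> 0) \<and> (\<exists>k\<in>K. g k t1 = 0)"
  proof (rule first_event[of K g k0 t0])
    show "finite K" by simp
    show "\<forall>k\<in>K. continuous_on UNIV (g k)" unfolding g_def hk_def
      by (auto intro!: continuous_intros FF_cont)
    show "\<forall>k\<in>K. 0 < g k 0" unfolding g_def sg_def using hkne by force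
    show "k0 \<in> K" unfolding K_def using k0 by simp
    show "g k0 t0 \<le> 0" unfolding g_def hk_def using k0 by simp
  qed (use k0 in simp)
  then obtain t1 k1 where t1: "\<forall>k\<in>K. g k t1 \<ge> 0" "k1 \<in> K" "g k1 t1 = 0" by blast
  define b' where "b' = \<beta> + t1 *\<^sub>R d"
  have hkt: "hk k t1 = FF X Y b' k - FF X Y b' m" for k unfolding hk_def b'_def by simp
  have le1: "FF X Y b' a \<le> FF X Y b' m" if a: "a \<in> Ast" for a
  proof (cases "a \<in> Gs \<beta>")
    case True then show ?thesis using HG unfolding b'_def by simp
  next
    case False
    then have "a \<in> K" unfolding K_def by simp
    have "FF X Y \<beta> a \<le> FF X Y \<beta> b0" using gd a ab(2) unfolding good_def by blast
    then have "hk a 0 < 0" using hkne[OF \<open>a \<in> K\<close>] ab(3) unfolding hk0 by linarith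
    then have "sg a = -1" unfolding sg_def by simp
    then show ?thesis using t1(1) \<open>a \<in> K\<close> unfolding g_def hkt by force
  qed
  have le2: "FF X Y b' m \<le> FF X Y b' b" if b: "b \<notin> Ast" for b
  proof (cases "b \<in> Gs \<beta>")
    case True then show ?thesis using HG unfolding b'_def by simp
  next
    case False
    then have "b \<in> K" unfolding K_def by simp
    have "FF X Y \<beta> a0 \<le> FF X Y \<beta> b" using gd b ab(1) unfolding good_def by blast
    then have "hk b 0 > 0" using hkne[OF \<open>b \<in> K\<close>] unfolding hk0 by linarith
    then have "sg b = 1" unfolding sg_def by simp
    then show ?thesis using t1(1) \<open>b \<in> K\<close> unfolding g_def hkt by force
  qed
  have tie: "FF X Y b' a0 = FF X Y b' b0" using HG a0G unfolding b'_def by simp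
  have vb: "valid b'" unfolding valid_def good_def
    using le1 le2 cAst ab tie by (meson order_trans)
  have lev': "ord_sq_resid X Y b' h = FF X Y b' a0" using valid_level[OF vb ab(1,2) tie] by simp
  have sub: "insert k1 (Gs \<beta>) \<subseteq> Gs b'"
  proof
    fix k assume "k \<in> insert k1 (Gs \<beta>)"
    then consider "k = k1" | "k \<in> Gs \<beta>" by auto
    then show "k \<in> Gs b'"
    proof cases
      case 1
      have "hk k1 t1 = 0" using t1(3) unfolding g_def sg_def by (auto split: if_splits)
      then have "FF X Y b' k1 = FF X Y b' m" unfolding hkt by simp
      moreover have "FF X Y b' m = FF X Y b' a0" using HG a0G unfolding b'_def by simp
      ultimately show ?thesis using 1 lev' unfolding Gs_def by simp
    next
      case 2
      then have "FF X Y b' k = FF X Y b' m" using HG unfolding b'_def by simp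
      moreover have "FF X Y b' m = FF X Y b' a0" using HG a0G unfolding b'_def by simp
      ultimately show ?thesis using lev' unfolding Gs_def by simp
    qed
  qed
  have "k1 \<notin> Gs \<beta>" using t1(2) unfolding K_def by simp
  then have "card (Gs \<beta>) < card (insert k1 (Gs \<beta>))" by simp
  also have "\<dots> \<le> card (Gs b')" using sub by (intro card_mono) auto
  finally show ?thesis using vb by blast
qed


lemma ws_cand: "ws \<in> BSA_candidates h X Y"
proof -
  obtain \<beta>0 where "valid \<beta>0" using init by blast
  have bnd: "\<forall>y. valid y \<longrightarrow> card (Gs y) < CARD('n) + 1"
    by (auto simp: less_Suc_eq_le card_mono)
  obtain \<beta> where v: "valid \<beta>" and vmax: "\<forall>y. valid y \<longrightarrow> card (Gs y) \<le> card (Gs \<beta>)"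
    using ex_has_greatest_nat[of valid \<beta>0 "\<lambda>y. card (Gs y)", OF \<open>valid \<beta>0\<close> bnd] by blast
  obtain a0 b0 where ab: "a0 \<in> Ast" "b0 \<notin> Ast" "FF X Y \<beta> a0 = FF X Y \<beta> b0"
    using v unfolding valid_def by blast
  have gd: "good (FF X Y \<beta>) Ast h" using v unfolding valid_def by simp
  have lev: "ord_sq_resid X Y \<beta> h = FF X Y \<beta> a0" "ord_sq_resid X Y \<beta> (h+1) = FF X Y \<beta> a0"
    using valid_level[OF v ab] by simp_all
  define G where "G = Gs \<beta>"
  have a0G: "a0 \<in> G" unfolding G_def Gs_def using lev by simp
  have finG: "finite G" by simp
  define m where "m = Min G"
  have mG: "m \<in> G" unfolding m_def using finG a0G by (intro Min_in) auto
  have mle: "m \<le> k" if "k \<in> G" for k unfolding m_def using finG that by simp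
  have FmG: "FF X Y \<beta> k = FF X Y \<beta> m" if "k \<in> G" for k
    using that mG unfolding G_def Gs_def by simp
  define rm where "rm = resid X Y \<beta> m"
  have pos: "FF X Y \<beta> m > 0" using mG A2 unfolding G_def Gs_def by simp
  then have rm0: "rm \<noteq> 0" unfolding rm_def FF_def by auto
  define s where "s = (\<lambda>k. resid X Y \<beta> k = - rm)"
  define N where "N = (\<lambda>k. X$m + sgnb (s k) *\<^sub>R X$k)"
  have key: "rm + sgnb (s k) * resid X Y \<beta> k = 0" if "k \<in> G" for k
  proof -
    have "(resid X Y \<beta> k)^2 = rm^2" using FmG[OF that] unfolding FF_def rm_def by simp
    then have "resid X Y \<beta> k = rm \<or> resid X Y \<beta> k = - rm" by (simp add: power2_eq_iff)
    then show ?thesis unfolding s_def sgnb_def using rm0 by auto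
  qed
  have sg2: "sgnb b = 1 \<or> sgnb b = -1" for b unfolding sgnb_def by simp
  have orth: "d = 0" if dN: "\<forall>k\<in>G. N k \<bullet> d = 0" for d
  proof (rule ccontr)
    assume dne: "d \<noteq> 0"
    have xk: "X$m \<bullet> d + sgnb (s k) * (X$k \<bullet> d) = 0" if "k \<in> G" for k
      using dN that unfolding N_def by (simp add: inner_add_left)
    have rt: "resid X Y (\<beta> + t *\<^sub>R d) k = resid X Y \<beta> k - t * (X$k \<bullet> d)" for k t
      unfolding resid_def by (simp add: inner_add_right)
    have HG: "\<forall>k\<in>Gs \<beta>. \<forall>t. FF X Y (\<beta> + t *\<^sub>R d) k = FF X Y (\<beta> + t *\<^sub>R d) m"
    proof (intro ballI allI)
      fix k t assume k: "k \<in> Gs \<beta>"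
      then have kG: "k \<in> G" unfolding G_def .
      have "resid X Y (\<beta> + t *\<^sub>R d) k = resid X Y (\<beta> + t *\<^sub>R d) m \<or>
            resid X Y (\<beta> + t *\<^sub>R d) k = - resid X Y (\<beta> + t *\<^sub>R d) m"
      proof (cases "sgnb (s k) = 1")
        case True
        then have "X$k \<bullet> d = - (X$m \<bullet> d)" "resid X Y \<beta> k = - rm"
          using key[OF kG] xk[OF kG] by simp_all
        then show ?thesis unfolding rt rm_def
          by (intro disjI2) (simp add: algebra_simps)
      next
        case False
        then have "sgnb (s k) = -1" using sg2[of "s k"] by simp
        then have "X$k \<bullet> d = X$m \<bullet> d" "resid X Y \<beta> k = rm"
          using key[OF kG] xk[OF kG] by simp_all
        then show ?thesis unfolding rt rm_def
          by (intro disjI1) (simp add: algebra_simps)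
      qed
      then show "FF X Y (\<beta> + t *\<^sub>R d) k = FF X Y (\<beta> + t *\<^sub>R d) m"
        unfolding FF_def by auto
    qed
    show False
    proof (cases "G = UNIV")
      case True
      have "X$m \<bullet> d \<noteq> 0"
      proof
        assume "X$m \<bullet> d = 0"
        then have "\<forall>k. X$k \<bullet> d = 0" using xk True sg2 by (metis UNIV_I add_0 mult_eq_0_iff zero_neq_neg_one zero_neq_one)
        then show False using fullrank dne by blast
      qed
      define t where "t = rm / (X$m \<bullet> d)"
      define b' where "b' = \<beta> + t *\<^sub>R d"
      have "resid X Y b' m = 0" unfolding b'_def rt t_def rm_def using \<open>X$m \<bullet> d \<noteq> 0\<close> by simp
      then have z: "FF X Y b' k = 0" for k using HG True unfolding G_def b'_def FF_def
        by (metis UNIV_I power_zero_numeral)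
      obtain Gb where Gb: "good (FF X Y b') Gb h" using good_ex hn by (metis less_imp_le)
      obtain c where "SL (FF X Y b') ! (h-1) = FF X Y b' c" using good_h[OF Gb h1] by blast
      then have "ord_sq_resid X Y b' h = 0" using z ord_SL[of X Y b' h] by simp
      moreover have "0 < ord_sq_resid X Y b' h" using A2 by blast
      ultimately show False by simp
    next
      case False
      then obtain k0 where k0: "k0 \<notin> G" by auto
      have root: "\<exists>k t. k \<notin> G \<and> FF X Y (\<beta> + t *\<^sub>R d) k = FF X Y (\<beta> + t *\<^sub>R d) m"
      proof (rule ccontr)
        assume nr: "\<not> ?thesis"
        have uv: "X$k \<bullet> d = X$m \<bullet> d \<and> X$k \<bullet> d = - (X$m \<bullet> d)" if k: "k \<notin> G" for k
        proof (intro conjI)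
          show "X$k \<bullet> d = X$m \<bullet> d"
          proof (rule ccontr)
            assume ne: "X$k \<bullet> d \<noteq> X$m \<bullet> d"
            define t where "t = (resid X Y \<beta> k - resid X Y \<beta> m) / (X$k \<bullet> d - X$m \<bullet> d)"
            have "resid X Y (\<beta> + t *\<^sub>R d) k = resid X Y (\<beta> + t *\<^sub>R d) m"
              unfolding rt t_def using ne by (simp add: field_simps)
            then show False using nr k unfolding FF_def by metis
          qed
          show "X$k \<bullet> d = - (X$m \<bullet> d)"
          proof (rule ccontr)
            assume ne: "X$k \<bullet> d \<noteq> - (X$m \<bullet> d)"
            then have ne': "X$k \<bullet> d + X$m \<bullet> d \<noteq> 0" by linarith
            define t where "t = (resid X Y \<beta> k + resid X Y \<beta> m) / (X$k \<bullet> d + X$m \<bullet> d)"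
            have "resid X Y (\<beta> + t *\<^sub>R d) k = - resid X Y (\<beta> + t *\<^sub>R d) m"
              unfolding rt t_def using ne' by (simp add: field_simps)
            then have "FF X Y (\<beta> + t *\<^sub>R d) k = FF X Y (\<beta> + t *\<^sub>R d) m" unfolding FF_def by simp
            then show False using nr k by metis
          qed
        qed
        have xm0: "X$m \<bullet> d = 0" using uv[OF k0] by linarith
        have "\<forall>k. X$k \<bullet> d = 0"
        proof
          fix k show "X$k \<bullet> d = 0"
          proof (cases "k \<in> G")
            case True
            then show ?thesis using xk[OF True] xm0 sg2[of "s k"] by auto
          next
            case False then show ?thesis using uv[OF False] xm0 by simp
          qed
        qed
        then show False using fullrank dne by blast
      qed
      then obtain k t where kt: "k \<notin> G" "FF X Y (\<beta> + t *\<^sub>R d) k = FF X Y (\<beta> + t *\<^sub>R d) m" by blast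
      have "t \<noteq> 0"
      proof
        assume "t = 0"
        then have "FF X Y \<beta> k = FF X Y \<beta> m" using kt by simp
        then show False using kt(1) mG unfolding G_def Gs_def by simp
      qed
      have "\<exists>\<beta>'. valid \<beta>' \<and> card (Gs \<beta>) < card (Gs \<beta>')"
      proof (cases "t > 0")
        case True
        show ?thesis by (rule step[OF v mG[unfolded G_def] HG kt(1)[unfolded G_def] True kt(2)])
      next
        case False
        then have tn: "- t > 0" using \<open>t \<noteq> 0\<close> by simp
        have HG': "\<forall>k\<in>Gs \<beta>. \<forall>t. FF X Y (\<beta> + t *\<^sub>R (-d)) k = FF X Y (\<beta> + t *\<^sub>R (-d)) m"
          using HG by (metis scaleR_minus_left scaleR_minus_right)
        have "FF X Y (\<beta> + (-t) *\<^sub>R (-d)) k = FF X Y (\<beta> + (-t) *\<^sub>R (-d)) m" using kt(2) by simp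
        then show ?thesis by (rule step[OF v mG[unfolded G_def] HG' kt(1)[unfolded G_def] tn])
      qed
      then show False using vmax by (meson not_le)
    qed
  qed
  define V where "V = N ` (G - {m})"
  have Nm: "N m = 0" unfolding N_def s_def sgnb_def rm_def using rm0 by (simp add: rm_def)
  have spanV: "span V = UNIV"
  proof (rule ccontr)
    assume "span V \<noteq> UNIV"
    then obtain a where a: "a \<noteq> 0" "\<forall>x\<in>span V. a \<bullet> x = 0" using span_not_UNIV_orthogonal by blast
    have "\<forall>k\<in>G. N k \<bullet> a = 0"
    proof
      fix k assume k: "k \<in> G"
      show "N k \<bullet> a = 0"
      proof (cases "k = m")
        case True then show ?thesis using Nm by simp
      next
        case False
        then have "N k \<in> span V" unfolding V_def using k by (intro span_base) auto
        then have "a \<bullet> N k = 0" using a(2) by blast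
        then show ?thesis by (simp add: inner_commute)
      qed
    qed
    then show False using orth a(1) by blast
  qed
  obtain B where B: "B \<subseteq> V" "V \<subseteq> span B" "card B = dim V" by (rule basis_exists)
  have dimV: "dim V = CARD('p)"
  proof -
    have "dim V = dim (span V)" by simp
    also have "\<dots> = CARD('p)" unfolding spanV by simp
    finally show ?thesis .
  qed
  have spanB: "span B = UNIV"
  proof -
    have "span V \<subseteq> span B" using B(2) by (intro span_minimal) auto
    then show ?thesis using spanV by auto
  qed
  obtain U where U: "U \<subseteq> G - {m}" "inj_on N U" "B = N ` U"
    using B(1) subset_image_inj[of B N "G - {m}"] unfolding V_def by blast
  have cU: "card U = CARD('p)" using U B(3) dimV by (simp add: card_image)
  obtain e where e: "bij_betw e (UNIV :: 'p set) U"
    using finite_same_card_bij[of "UNIV :: 'p set" U] cU by auto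
  define S where "S = insert m U"
  have mU: "m \<notin> U" using U by auto
  have cS: "card S = CARD('p) + 1" unfolding S_def using mU cU by simp
  have MinS: "Min S = m" unfolding S_def
    by (rule Min_eqI) (use U mle in auto)
  have "S - {Min S} = S - {m}" using MinS by simp
  also have "\<dots> = U" unfolding S_def using mU by auto
  finally have SmU: "S - {Min S} = U" .
  define s' where "s' = (\<lambda>j. s (e j))"
  define Am :: "real^'p^'p" where "Am = (\<chi> j. X$(Min S) + sgnb (s' j) *\<^sub>R X$(e j))"
  define bv :: "real^'p" where "bv = (\<chi> j. Y$(Min S) + sgnb (s' j) * Y$(e j))"
  have AmN: "Am$j = N (e j)" for j unfolding Am_def N_def s'_def MinS by simp
  have eU: "e j \<in> U" for j using e unfolding bij_betw_def by auto
  have eG: "e j \<in> G" for j using eU U by auto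
  have invA: "invertible Am"
    unfolding invertible_left_inverse matrix_left_invertible_ker
  proof (intro allI impI)
    fix x assume Ax: "Am *v x = 0"
    have "N (e j) \<bullet> x = 0" for j using Ax by (simp add: vec_eq_iff mv_nth AmN)
    then have "\<forall>v\<in>B. v \<bullet> x = 0" using U(3) e unfolding bij_betw_def by auto
    then have "B \<subseteq> {y. orthogonal x y}" unfolding orthogonal_def by (auto simp: inner_commute)
    then have "span B \<subseteq> {y. orthogonal x y}"
      by (intro span_minimal subspace_orthogonal_to_vector)
    then have "orthogonal x x" using spanB by auto
    then show "x = 0" unfolding orthogonal_def by simp
  qed
  have Ab: "Am *v \<beta> = bv"
  proof -
    have "Am$j \<bullet> \<beta> = bv$j" for j
    proof -
      have "rm + sgnb (s (e j)) * resid X Y \<beta> (e j) = 0" using key[OF eG] .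
      then show ?thesis unfolding AmN N_def bv_def s'_def MinS rm_def resid_def
        by (simp add: inner_add_left algebra_simps)
    qed
    then show ?thesis by (simp add: vec_eq_iff mv_nth)
  qed
  have b0: "matrix_inv Am *v bv = \<beta>"
    unfolding Ab[symmetric] matrix_vector_mul_assoc matrix_inv_left'[OF invA] by simp
  have c1: "(resid X Y \<beta> (Min S))^2 = ord_sq_resid X Y \<beta> h"
    using mG unfolding MinS G_def Gs_def FF_def by simp
  have c2: "ord_sq_resid X Y \<beta> h = ord_sq_resid X Y \<beta> (h + 1)" using lev by simp
  have c3: "relZ h X Y \<beta> ws"
  proof -
    have "OF h X Y \<beta> = sum (FF X Y \<beta>) Ast" by (simp only: OF_SL good_sum[OF gd])
    also have "\<dots> = (\<Sum>i\<in>UNIV. ws$i * (resid X Y \<beta> i)^2)"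
      using Qnh_sum[OF ws, of "FF X Y \<beta>"] unfolding Ast_def FF_def by simp
    finally show ?thesis unfolding relZ_def .
  qed
  show ?thesis unfolding BSA_candidates_def Let_def
    apply (rule CollectI, rule conjI[OF ws])
    apply (rule exI[of _ S], rule exI[of _ e], rule exI[of _ s'])
    using cS e SmU invA b0 c1 c2 c3 unfolding Am_def bv_def by simp
qed

end


theorem theorem2:
  fixes X :: "real^'p^('n::{finite,linorder})" and Y :: "real^('n::{finite,linorder})" and h :: nat
  assumes np: "CARD('p) < CARD('n)"
    and hp: "CARD('p) \<le> h" and hn: "h < CARD('n)"
    and A1: "\<forall>i j. i \<noteq> j \<longrightarrow> X$i \<noteq> X$j \<and> X$i \<noteq> - X$j"
    and A1': "\<forall>i. X$i \<noteq> 0"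
    and A2: "\<forall>\<beta>. ord_sq_resid X Y \<beta> h > 0"
    and A3: "\<forall>s :: 'n \<Rightarrow> bool.
               dim {X$(Min UNIV) + sgnb (s j) *\<^sub>R X$j | j. j \<noteq> Min UNIV} = CARD('p)"
    and A4: "\<forall>w \<in> Qnh h. invertible (transpose X ** diagm w ** X)"
  shows "BSA_candidates h X Y \<noteq> {} \<and>
         (\<forall>w \<in> BSA_candidates h X Y.
            (\<forall>w' \<in> BSA_candidates h X Y. Jw X Y w \<le> Jw X Y w') \<longrightarrow>
            (\<forall>\<beta>. OF h X Y (beta_w X Y w) \<le> OF h X Y \<beta>))"
proof -
  have c0: "0 < CARD('p)" by simp
  have h1: "1 \<le> h" using hp c0 by linarith
  interpret L: lts X Y h using h1 hn A2 A4 A1' by unfold_locales auto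
  obtain A0 :: "'n set" where A0: "card A0 = h"
    using hn obtain_subset_with_card_n[of h "UNIV :: 'n set"] by auto
  have ne: "Qnh h \<noteq> ({} :: (real^('n::{finite,linorder})) set)" using ind_Qnh(1)[OF A0] by auto
  have fQ: "finite (Qnh h :: (real^('n::{finite,linorder})) set)" by (rule Qnh_finite)
  have "Min (Jw X Y ` Qnh h) \<in> Jw X Y ` Qnh h" using fQ ne by (intro Min_in) auto
  then obtain ws where ws: "ws \<in> Qnh h" "Jw X Y ws = Min (Jw X Y ` Qnh h)" by auto
  have wsmin: "\<forall>w'\<in>Qnh h. Jw X Y ws \<le> Jw X Y w'" using ws(2) fQ by simp
  interpret L2: lts2 X Y h ws using ws(1) wsmin by unfold_locales auto
  have c: "ws \<in> BSA_candidates h X Y" by (rule L2.ws_cand)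
  show ?thesis
  proof (intro conjI ballI impI allI)
    show "BSA_candidates h X Y \<noteq> {}" using c by auto
  next
    fix w \<beta> assume w: "w \<in> BSA_candidates h X Y"
      and wm: "\<forall>w'\<in>BSA_candidates h X Y. Jw X Y w \<le> Jw X Y w'"
    have wQ: "w \<in> Qnh h" using w unfolding BSA_candidates_def by simp
    have "OF h X Y (beta_w X Y w) \<le> gw X Y w (beta_w X Y w)" by (rule L.OF_lower[OF wQ])
    also have "\<dots> = Jw X Y w" using Jw_eq[OF wQ, where X=X and Y=Y] by simp
    also have "\<dots> \<le> Jw X Y ws" using wm c by blast
    also have "\<dots> \<le> OF h X Y \<beta>" by (rule L.OF_ge_J[OF ws(1) wsmin])
    finally show "OF h X Y (beta_w X Y w) \<le> OF h X Y \<beta>" .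
  qed
qed

end
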